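(* The map $f$ defined below is a bijection from $\mathcal{G}_2$ onto $\mathcal{A}_2$, and $f(\pi)$ is a partition of the same integer as $\pi$.
   Context: Partitions are nonincreasing finite sequences of positive integers; $m_j(\pi)$ is the multiplicity of $j$ in $\pi$, $\ell(\pi)$ the number of parts, and $\pi\cup\lambda$ the partition formed by all parts of both (as a multiset). $\langle a^{m}\rangle$ denotes the partition consisting of $m$ copies of $a$. $\mathcal{G}_2$ is the set of partitions $\pi$ with $m_1(\pi)\le 1$ and $m_j(\pi)+m_{j+1}(\pi)\le 2$ for all $j\ge1$. For $\pi\in\mathcal{G}_2$ every part has multiplicity at most $2$. Let $D(\pi)$ be the number of distinct parts of multiplicity $2$, let $R_1(\pi)>R_2(\pi)>\dots>R_{D(\pi)}(\pi)$ be these parts, and set $R_{D(\pi)+1}(\pi)=0$, $R_0(\pi)=\infty$. For $0\le k\le D(\pi)$ let $\pi^{(k)}$ be the partition consisting of the parts of $\pi$ strictly between $R_{k+1}(\pi)$ and $R_k(\pi)$ (these parts are distinct). For a partition $\mu$ and integer $c$, $\mu+\langle c^{\ell(\mu)}\rangle$ denotes $\mu$ with $c$ added to each part. Define $$f(\pi)=\bigcup_{i=1}^{D(\pi)}\big\langle (2i)^{R_i(\pi)-R_{i+1}(\pi)-\ell(\pi^{(i)})}\big\rangle\ \cup\ \bigcup_{i=0}^{D(\pi)}\Big(\pi^{(i)}+\langle (2i)^{\ell(\pi^{(i)})}\rangle\Big).$$ For a partition $\lambda$, $R_1(\lambda)$ is its largest part of multiplicity $\ge2$ (or $0$ if none).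 $\mathcal{A}_2$ is the set of partitions $\lambda$ such that $m_j(\lambda)\le1$ for odd $j$, $m_j(\lambda)=0$ for odd $j<R_1(\lambda)$, and $m_j(\lambda)\ge 2$ for even $j$ with $0<j<R_1(\lambda)$. *)

theory Defs
  imports Main "HOL-Library.Multiset"
begin

text \<open>Partitions are represented as finite multisets of positive integers;
  the multiplicity m_j(pi) is count pi j, the number of parts is size pi,
  the union of partitions is the multiset sum, and the partition
  <a^m> is replicate_mset m a.\<close>

definition is_partition :: "nat multiset \<Rightarrow> bool" where
  "is_partition p \<longleftrightarrow> 0 \<notin># p"

definition G2 :: "nat multiset set" where
  "G2 = {p. is_partition p \<and> count p 1 \<le> 1 \<and>
             (\<forall>j\<ge>1. count p j + count p (j + 1) \<le> 2)}"

definition Rlist :: "nat multiset \<Rightarrow> nat list" where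
  "Rlist p = rev (sorted_list_of_set {j. count p j = 2})"

definition D :: "nat multiset \<Rightarrow> nat" where
  "D p = length (Rlist p)"

text \<open>R p i for 1 <= i <= D p is R_i(pi); R p (D p + 1) = 0.
  (R_0 = infinity is treated separately in piK.)\<close>
definition R :: "nat multiset \<Rightarrow> nat \<Rightarrow> nat" where
  "R p i = (if 1 \<le> i \<and> i \<le> D p then Rlist p ! (i - 1) else 0)"

definition piK :: "nat multiset \<Rightarrow> nat \<Rightarrow> nat multiset" where
  "piK p k = filter_mset (\<lambda>x. R p (k + 1) < x \<and> (k = 0 \<or> x < R p k)) p"

definition f :: "nat multiset \<Rightarrow> nat multiset" where
  "f p = (\<Sum>i\<in>{1..D p}. replicate_mset (R p i - R p (i + 1) - size (piK p i)) (2 * i))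
       + (\<Sum>i\<in>{0..D p}. image_mset (\<lambda>x. x + 2 * i) (piK p i))"

definition R1 :: "nat multiset \<Rightarrow> nat" where
  "R1 l = Max (insert 0 {j. count l j \<ge> 2})"

definition A2 :: "nat multiset set" where
  "A2 = {l. is_partition l \<and>
            (\<forall>j. odd j \<longrightarrow> count l j \<le> 1) \<and>
            (\<forall>j. odd j \<and> j < R1 l \<longrightarrow> count l j = 0) \<and>
            (\<forall>j. even j \<and> 0 < j \<and> j < R1 l \<longrightarrow> count l j \<ge> 2)}"

end

theory Submission
  imports Defs
begin

lemma count_plus2: "count (image_mset (\<lambda>x. x + 2) M) (j::nat) = (if 2 \<le> j then count M (j - 2) else 0)"
  by (induction M) auto

lemma size_le_card:
  assumes "\<And>x. count M x \<le> 1" "set_mset M \<subseteq> A" "finite A"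
  shows "size M \<le> card A"
proof -
  have "M \<subseteq># mset_set A"
    unfolding subseteq_mset_def
  proof
    fix x show "count M x \<le> count (mset_set A) x"
      using assms by (cases "x \<in># M") (auto simp: count_mset_set not_in_iff)
  qed
  then have "size M \<le> size (mset_set A)" by (rule size_mset_mono)
  then show ?thesis by simp
qed

lemma finE: "finite {j. count p j = (2::nat)}"
  by (rule finite_subset[of _ "set_mset p"]) (auto simp flip: count_greater_zero_iff)

lemma D_card: "D p = card {j. count p j = 2}"
  unfolding D_def Rlist_def using finE by simp

lemma Rlist_step:
  assumes ne: "{j. count p j = 2} \<noteq> {}"
  defines "m \<equiv> Max {j. count p j = 2}"
  shows "Rlist p = m # Rlist (filter_mset (\<lambda>x. x < m) p)"
proof -
  let ?E = "{j. count p j = 2}"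
  have mE: "m \<in> ?E" using ne finE unfolding m_def by (rule Max_in[rotated])
  have lt: "j \<in> ?E \<Longrightarrow> j \<le> m" for j using finE[of p] unfolding m_def by (simp add: Max_ge)
  have E2: "{j. count (filter_mset (\<lambda>x. x < m) p) j = 2} = ?E - {m}"
    using lt by (auto simp: count_filter_mset) (metis less_le)
  have "sorted_list_of_set ?E = sorted_list_of_set (?E - {m}) @ [m]"
  proof -
    have fin: "finite (?E - {m})" using finE by auto
    let ?L = "sorted_list_of_set (?E - {m}) @ [m]"
    have "sorted_wrt (<) ?L" using fin lt
      by (auto simp: sorted_wrt_append strict_sorted_list_of_set intro: le_neq_trans)
    moreover have "set ?L = ?E" using fin mE by auto
    moreover have "length ?L = card ?E"
    proof -
      have "card ?E > 0" using ne finE[of p] by (simp add: card_gt_0_iff)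
      then show ?thesis using fin mE finE[of p] by (simp add: card_Diff_singleton)
    qed
    ultimately show ?thesis using finE[of p] sorted_list_of_set_unique by blast
  qed
  then show ?thesis unfolding Rlist_def E2 by simp
qed

lemma R_step:
  assumes "Rlist p = m # Rlist q"
  shows "D p = Suc (D q)" "R p (Suc 0) = m" "R p (Suc (Suc i)) = R q (Suc i)"
  using assms by (auto simp: D_def R_def)

lemma set_Rlist: "set (Rlist q) = {j. count q j = 2}"
  unfolding Rlist_def using finE[of q] by simp

lemma R_mem: "1 \<le> i \<Longrightarrow> i \<le> D q \<Longrightarrow> count q (R q i) = 2"
proof -
  assume a: "1 \<le> i" "i \<le> D q"
  then have "R q i \<in> set (Rlist q)" unfolding R_def D_def by auto
  then show ?thesis by (simp add: set_Rlist)
qed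

lemma R_out: "\<not> (1 \<le> i \<and> i \<le> D q) \<Longrightarrow> R q i = 0"
  unfolding R_def by auto

lemma image_mset_sum: "image_mset g (sum F A) = sum (\<lambda>i. image_mset g (F i)) A"
  by (induction A rule: infinite_finite_induct) auto

lemma sum_split1: "sum g {Suc 0..Suc n} = g (Suc 0) + sum (\<lambda>j. g (Suc j)) {Suc 0..n}"
proof -
  have "sum g {Suc 0..Suc n} = g (Suc 0) + sum g {Suc (Suc 0)..Suc n}" by (rule sum.atLeast_Suc_atMost) simp
  also have "sum g {Suc (Suc 0)..Suc n} = sum (\<lambda>j. g (Suc j)) {Suc 0..n}" by (rule sum.shift_bounds_cl_Suc_ivl)
  finally show ?thesis .
qed

lemma sum_split0: "sum g {0..Suc n} = g 0 + sum (\<lambda>j. g (Suc j)) {0..n}"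
proof -
  have "sum g {0..Suc n} = g 0 + sum g {Suc 0..Suc n}" by (rule sum.atLeast_Suc_atMost) simp
  also have "sum g {Suc 0..Suc n} = sum (\<lambda>j. g (Suc j)) {0..n}" by (rule sum.shift_bounds_cl_Suc_ivl)
  finally show ?thesis .
qed

lemma f_step:
  assumes st: "Rlist p = m # Rlist q" and q: "q = filter_mset (\<lambda>x. x < m) p"
    and lt: "\<And>i. R q i < m"
  shows "f p = replicate_mset (m - R q 1 - size (piK q 0)) 2 + filter_mset (\<lambda>x. m < x) p
              + image_mset (\<lambda>x. x + 2) (f q)"
proof -
  note Rs = R_step[OF st]
  have pk0: "piK p 0 = filter_mset (\<lambda>x. m < x) p" unfolding piK_def using Rs by simp
  have qq: "filter_mset (\<lambda>x. x < m) p = q" using q by simp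
  have pkS: "piK p (Suc k) = piK q k" for k
  proof -
    have "piK p (Suc k) = filter_mset (\<lambda>x. R q (Suc k) < x \<and> (k = 0 \<or> x < R q k)) (filter_mset (\<lambda>x. x < m) p)"
      unfolding piK_def filter_filter_mset
    proof (rule filter_mset_cong[OF refl])
      fix x
      show "(R p (Suc k + 1) < x \<and> (Suc k = 0 \<or> x < R p (Suc k))) =
            (x < m \<and> R q (Suc k) < x \<and> (k = 0 \<or> x < R q k))"
      proof (cases k)
        case 0 then show ?thesis using Rs by auto
      next
        case (Suc k') then show ?thesis using Rs lt[of k] by auto
      qed
    qed
    also have "... = piK q k" unfolding qq piK_def by simp
    finally show ?thesis .
  qed
  let ?A = "\<lambda>p i. replicate_mset (R p i - R p (i + 1) - size (piK p i)) (2 * i)"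
  let ?B = "\<lambda>p i. image_mset (\<lambda>x. x + 2 * i) (piK p i)"
  have A1: "sum (?A p) {1..D p} = replicate_mset (m - R q 1 - size (piK q 0)) 2
      + image_mset (\<lambda>x. x + 2) (sum (?A q) {1..D q})"
  proof -
    have "sum (?A p) {1..D p} = ?A p (Suc 0) + sum (\<lambda>j. ?A p (Suc j)) {Suc 0..D q}"
      using Rs sum_split1[of "?A p" "D q"] by simp
    also have "sum (\<lambda>j. ?A p (Suc j)) {Suc 0..D q} = sum (\<lambda>j. image_mset (\<lambda>x. x + 2) (?A q j)) {1..D q}"
    proof (rule sum.cong)
      fix j assume "j \<in> {1..D q}"
      then obtain j' where j: "j = Suc j'" by (cases j) auto
      show "?A p (Suc j) = image_mset (\<lambda>x. x + 2) (?A q j)"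
        using Rs pkS j by simp
    qed simp
    finally show ?thesis using Rs pkS by (simp add: image_mset_sum)
  qed
  have B1: "sum (?B p) {0..D p} = filter_mset (\<lambda>x. m < x) p
      + image_mset (\<lambda>x. x + 2) (sum (?B q) {0..D q})"
  proof -
    have "sum (?B p) {0..D p} = ?B p 0 + sum (\<lambda>j. ?B p (Suc j)) {0..D q}"
      using Rs sum_split0[of "?B p" "D q"] by simp
    also have "sum (\<lambda>j. ?B p (Suc j)) {0..D q} = sum (\<lambda>j. image_mset (\<lambda>x. x + 2) (?B q j)) {0..D q}"
    proof (rule sum.cong)
      fix j assume "j \<in> {0..D q}"
      have "(\<lambda>x. x + 2) \<circ> (\<lambda>x. x + 2 * j) = (\<lambda>x. x + 2 * Suc j)" by auto
      then show "?B p (Suc j) = image_mset (\<lambda>x. x + 2) (?B q j)"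
        using pkS by (simp add: multiset.map_comp)
    qed simp
    finally show ?thesis using pk0 by (simp add: image_mset_sum)
  qed
  show ?thesis unfolding f_def[of p] f_def[of q] A1 B1 by (simp add: ac_simps)
qed

lemma G2_count2: "p \<in> G2 \<Longrightarrow> count p j \<le> 2"
  unfolding G2_def is_partition_def
  by (cases j) (auto simp: not_in_iff dest!: spec[of _ j])

lemma G2_count0: "p \<in> G2 \<Longrightarrow> count p 0 = 0"
  unfolding G2_def is_partition_def by (simp add: not_in_iff)

lemma D0_E: "D p = 0 \<Longrightarrow> count p j \<noteq> 2"
  using finE[of p] by (auto simp: D_card)

lemma f_base:
  assumes "p \<in> G2" "D p = 0"
  shows "f p = p" "count p j \<le> 1" "R p 1 = 0" "piK p 0 = p"
proof -
  show R0: "R p 1 = 0" using assms by (simp add: R_out)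
  have "piK p 0 = filter_mset (\<lambda>x. 0 < x) p" unfolding piK_def using R0 by simp
  also have "... = p" using G2_count0[OF assms(1)]
    by (intro multiset_eqI) (auto simp: count_filter_mset)
  finally show "piK p 0 = p" .
  then show "f p = p" unfolding f_def using assms by simp
  show "count p j \<le> 1" using G2_count2[OF assms(1), of j] D0_E[OF assms(2), of j] by simp
qed

lemma decomp:
  assumes pG: "p \<in> G2" and D: "D p \<noteq> 0"
  defines "m \<equiv> R p 1"
  defines "T \<equiv> filter_mset (\<lambda>x. m < x) p"
  defines "q \<equiv> filter_mset (\<lambda>x. x < m) p"
  shows "p = T + replicate_mset 2 m + q" "2 \<le> m" "q \<in> G2" "\<forall>x\<in>#q. x + 2 \<le> m"
        "\<forall>x\<in>#T. m + 2 \<le> x" "\<forall>x. count T x \<le> 1" "count p m = 2"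
        "f p = replicate_mset (m - R q 1 - size (piK q 0)) 2 + T + image_mset (\<lambda>x. x + 2) (f q)"
proof -
  let ?E = "{j. count p j = 2}"
  have ne: "?E \<noteq> {}" using D finE[of p] by (auto simp: D_card)
  have st: "Rlist p = Max ?E # Rlist q" using Rlist_step[OF ne]
    unfolding q_def m_def R_def D_def by simp
  have mM: "m = Max ?E" using R_step(2)[OF st] unfolding m_def by simp
  show cm: "count p m = 2" using Max_in[OF finE ne] mM by simp
  have big: "j > m \<Longrightarrow> count p j \<le> 1" for j
  proof -
    assume "j > m"
    then have "count p j \<noteq> 2" using Max_ge[OF finE[of p], of j] mM by auto
    then show ?thesis using G2_count2[OF pG, of j] by simp
  qed
  have c0: "count p 0 = 0" by (rule G2_count0[OF pG])
  have c1: "count p 1 \<le> 1" using pG by (simp add: G2_def)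
  have cpair: "j \<ge> 1 \<Longrightarrow> count p j + count p (j+1) \<le> 2" for j using pG by (simp add: G2_def)
  show m2: "2 \<le> m" using cm c0 c1 by (cases m; cases "m - 1") auto
  have cm1: "count p (m+1) = 0" using cpair[of m] cm m2 by simp
  have cm0: "count p (m-1) = 0" using cpair[of "m-1"] cm m2 by simp
  show "p = T + replicate_mset 2 m + q"
    unfolding T_def q_def by (rule multiset_eqI) (auto simp: cm)
  show "\<forall>x\<in>#q. x + 2 \<le> m"
  proof
    fix x assume "x \<in># q"
    then have "x < m" "x \<in># p" unfolding q_def by auto
    then show "x + 2 \<le> m" using cm0 by (cases "x = m - 1") (auto simp flip: count_greater_zero_iff)
  qed
  show "\<forall>x\<in>#T. m + 2 \<le> x"
  proof
    fix x assume "x \<in># T"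
    then have "m < x" "x \<in># p" unfolding T_def by auto
    then show "m + 2 \<le> x" using cm1 by (cases "x = m + 1") (auto simp flip: count_greater_zero_iff)
  qed
  show "\<forall>x. count T x \<le> 1" unfolding T_def using big by auto
  show "q \<in> G2"
  proof -
    have "count q j \<le> count p j" for j unfolding q_def by auto
    have "\<forall>j\<ge>1. count q j + count q (j + 1) \<le> 2"
    proof (intro allI impI)
      fix j :: nat assume "1 \<le> j"
      then have "count p j + count p (j+1) \<le> 2" using cpair by blast
      moreover have "count q j \<le> count p j" "count q (j+1) \<le> count p (j+1)"
        unfolding q_def by auto
      ultimately show "count q j + count q (j + 1) \<le> 2" by linarith
    qed
    moreover have "count q 1 \<le> 1" using c1 \<open>\<And>j. count q j \<le> count p j\<close>[of 1] by linarith
    moreover have "0 \<notin># q" using c0 unfolding q_def by (simp add: not_in_iff)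
    ultimately show ?thesis unfolding G2_def is_partition_def by blast
  qed
  have lt: "R q i < m" for i
  proof (cases "1 \<le> i \<and> i \<le> D q")
    case True
    then have "count q (R q i) = 2" using R_mem by blast
    then show ?thesis unfolding q_def by (auto split: if_splits)
  next
    case False then show ?thesis using R_out m2 by simp
  qed
  have "f p = replicate_mset (m - R q 1 - size (piK q 0)) 2 + filter_mset (\<lambda>x. m < x) p
              + image_mset (\<lambda>x. x + 2) (f q)"
    by (rule f_step[OF st[folded mM] q_def[THEN meta_eq_to_obj_eq] lt])
  then show "f p = replicate_mset (m - R q 1 - size (piK q 0)) 2 + T + image_mset (\<lambda>x. x + 2) (f q)"
    unfolding T_def .
qed

lemma piK0_T: "piK p 0 = filter_mset (\<lambda>x. R p 1 < x) p"
  unfolding piK_def by simp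

lemma bound:
  assumes pG: "p \<in> G2" and b: "\<forall>x\<in>#p. x \<le> b"
  shows "R p 1 + size (piK p 0) \<le> b"
proof (cases "D p = 0")
  case True
  note fb = f_base[OF pG True]
  have "size p \<le> card {1..b}"
  proof (rule size_le_card)
    show "\<And>x. count p x \<le> 1" by (rule fb(2))
    show "set_mset p \<subseteq> {1..b}"
    proof
      fix x assume x: "x \<in> set_mset p"
      have "x \<noteq> 0" using x G2_count0[OF pG] by (metis count_greater_zero_iff less_not_refl)
      then show "x \<in> {1..b}" using x b by auto
    qed
  qed simp
  then show ?thesis using fb by simp
next
  case False
  note dc = decomp[OF pG False]
  let ?m = "R p 1"
  let ?T = "filter_mset (\<lambda>x. ?m < x) p"
  have mb: "?m \<le> b" using b dc(7) by (simp flip: count_greater_zero_iff)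
  have "size ?T \<le> card {?m + 2..b}"
  proof (rule size_le_card)
    show "\<And>x. count ?T x \<le> 1" using dc(6) by blast
    show "set_mset ?T \<subseteq> {?m + 2..b}" using dc(5) b by auto
  qed simp
  then show ?thesis using mb by (simp add: piK0_T)
qed

lemma size_f: "p \<in> G2 \<Longrightarrow> size (f p) = R p 1 + size (piK p 0)"
proof (induction "size p" arbitrary: p rule: less_induct)
  case less
  show ?case
  proof (cases "D p = 0")
    case True then show ?thesis using f_base[OF less.prems True] by simp
  next
    case False
    note dc = decomp[OF less.prems False]
    let ?m = "R p 1"
    let ?q = "filter_mset (\<lambda>x. x < ?m) p"
    have sz: "size ?q < size p" using arg_cong[OF dc(1), of size] by simp
    have ih: "size (f ?q) = R ?q 1 + size (piK ?q 0)" using less.hyps[OF sz dc(3)] .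
    have "\<forall>x\<in>#?q. x \<le> ?m - 2" using dc(4) by force
    then have "R ?q 1 + size (piK ?q 0) \<le> ?m - 2" using bound[OF dc(3)] by blast
    then show ?thesis using dc(8) ih by (simp add: piK0_T)
  qed
qed

lemma decomp2:
  assumes pG: "p \<in> G2" and D: "D p \<noteq> 0"
  defines "m \<equiv> R p 1"
  defines "T \<equiv> filter_mset (\<lambda>x. m < x) p"
  defines "q \<equiv> filter_mset (\<lambda>x. x < m) p"
  shows "size (f q) + 2 \<le> m"
        "f p = replicate_mset (m - size (f q)) 2 + T + image_mset (\<lambda>x. x + 2) (f q)"
proof -
  note dc = decomp[OF pG D, folded m_def, folded T_def q_def]
  have "\<forall>x\<in>#q. x \<le> m - 2" using dc(4) by force
  then have "R q 1 + size (piK q 0) \<le> m - 2" using bound[OF dc(3)] by blast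
  then show "size (f q) + 2 \<le> m" using size_f[OF dc(3)] dc(2) by simp
  show "f p = replicate_mset (m - size (f q)) 2 + T + image_mset (\<lambda>x. x + 2) (f q)"
    using dc(8) size_f[OF dc(3)] by simp
qed

lemma sum_plus2: "sum_mset (image_mset (\<lambda>x. x + 2) M) = sum_mset M + 2 * size M"
  by (induction M) auto

lemma f_sum: "p \<in> G2 \<Longrightarrow> sum_mset (f p) = sum_mset p"
proof (induction "size p" arbitrary: p rule: less_induct)
  case less
  show ?case
  proof (cases "D p = 0")
    case True then show ?thesis using f_base[OF less.prems True] by simp
  next
    case False
    note dc = decomp[OF less.prems False]
    note d2 = decomp2[OF less.prems False]
    let ?m = "R p 1"
    let ?q = "filter_mset (\<lambda>x. x < ?m) p"
    have sz: "size ?q < size p" using arg_cong[OF dc(1), of size] by simp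
    have ih: "sum_mset (f ?q) = sum_mset ?q" using less.hyps[OF sz dc(3)] .
    have "sum_mset p = sum_mset (filter_mset (\<lambda>x. ?m < x) p) + 2 * ?m + sum_mset ?q"
      by (subst dc(1)) (simp add: sum_mset_replicate_mset)
    moreover have "sum_mset (f p) = 2 * (?m - size (f ?q)) + sum_mset (filter_mset (\<lambda>x. ?m < x) p)
        + (sum_mset (f ?q) + 2 * size (f ?q))"
      by (simp only: d2(2) sum_mset.union sum_plus2 sum_mset_replicate_mset) simp
    ultimately show ?thesis using d2(1) ih by simp
  qed
qed

lemma fin2: "finite {j. 2 \<le> count l (j::nat)}"
  by (rule finite_subset[of _ "set_mset l"]) (auto simp flip: count_greater_zero_iff)

lemma R1_ge: "2 \<le> count l j \<Longrightarrow> j \<le> R1 l"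
  unfolding R1_def using fin2[of l] by (auto intro: Max_ge)

lemma R1_le: "(\<And>j. 2 \<le> count l j \<Longrightarrow> j \<le> b) \<Longrightarrow> R1 l \<le> b"
  unfolding R1_def using fin2[of l] by (auto intro: Max.boundedI)

lemma R1_cases: "R1 l = 0 \<or> 2 \<le> count l (R1 l)"
proof -
  have "R1 l \<in> insert 0 {j. 2 \<le> count l j}" unfolding R1_def using fin2[of l] by (intro Max_in) auto
  then show ?thesis by auto
qed

lemma A2_step:
  assumes muA: "mu \<in> A2" and c: "2 \<le> c" and m2: "2 \<le> m"
    and mub: "\<forall>x\<in>#mu. x + 2 \<le> m" and Tb: "\<forall>x\<in>#T. m + 2 \<le> x" and T1: "\<forall>x. count T x \<le> 1"
  defines "l \<equiv> replicate_mset c 2 + T + image_mset (\<lambda>x. x + 2) mu"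
  shows "l \<in> A2" "R1 l = R1 mu + 2"
proof -
  have cl: "count l j = (if j = 2 then c else 0) + count T j + (if 2 \<le> j then count mu (j - 2) else 0)" for j
    unfolding l_def count_union count_plus2 by (simp add: count_replicate_mset)
  have Tz: "j < m + 2 \<Longrightarrow> count T j = 0" for j using Tb by (meson leD not_in_iff)
  have muz: "m < j + 2 \<Longrightarrow> count mu j = 0" for j using mub by (meson leD not_in_iff)
  have mu0: "count mu 0 = 0" using muA unfolding A2_def is_partition_def by (simp add: not_in_iff)
  have muodd: "odd j \<Longrightarrow> count mu j \<le> 1" for j using muA unfolding A2_def by blast
  have muodd0: "odd j \<Longrightarrow> j < R1 mu \<Longrightarrow> count mu j = 0" for j using muA unfolding A2_def by blast
  have mueven: "even j \<Longrightarrow> 0 < j \<Longrightarrow> j < R1 mu \<Longrightarrow> 2 \<le> count mu j" for j using muA unfolding A2_def by blast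
  have Rmu: "R1 mu + 2 \<le> m"
    using R1_cases[of mu] m2 mub by (auto simp flip: count_greater_zero_iff)
  show R1l: "R1 l = R1 mu + 2"
  proof (rule antisym)
    show "R1 l \<le> R1 mu + 2"
    proof (rule R1_le)
      fix j assume j: "2 \<le> count l j"
      show "j \<le> R1 mu + 2"
      proof (cases "j \<le> 2")
        case True then show ?thesis by simp
      next
        case False
        show ?thesis
        proof (cases "j < m + 2")
          case True
          then have "2 \<le> count mu (j - 2)" using j False Tz cl[of j] by simp
          then have "j - 2 \<le> R1 mu" by (rule R1_ge)
          then show ?thesis by simp
        next
          case False
          then have "count l j \<le> 1" using cl[of j] T1 muz[of "j-2"] m2 by simp
          then show ?thesis using j by simp
        qed
      qed
    qed
    show "R1 mu + 2 \<le> R1 l"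
    proof (cases "R1 mu = 0")
      case True
      then have "2 \<le> count l 2" using cl[of 2] c by simp
      then show ?thesis using True R1_ge[of l 2] by simp
    next
      case False
      then have "2 \<le> count mu (R1 mu)" using R1_cases[of mu] by simp
      then have "2 \<le> count l (R1 mu + 2)" using cl[of "R1 mu + 2"] by simp
      then show ?thesis by (rule R1_ge)
    qed
  qed
  have "0 \<notin># l" using cl[of 0] Tz[of 0] by (simp add: not_in_iff)
  moreover have "\<forall>j. odd j \<longrightarrow> count l j \<le> 1"
  proof (intro allI impI)
    fix j :: nat assume o: "odd j"
    show "count l j \<le> 1"
    proof (cases "j < m + 2")
      case True then show ?thesis using cl[of j] Tz[of j] o muodd[of "j-2"]
        by (cases "2 \<le> j") auto
    next
      case False then show ?thesis using cl[of j] T1 muz[of "j-2"] o by auto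
    qed
  qed
  moreover have "\<forall>j. odd j \<and> j < R1 l \<longrightarrow> count l j = 0"
  proof (intro allI impI)
    fix j :: nat assume o: "odd j \<and> j < R1 l"
    then have "j < m + 2" using R1l Rmu by simp
    then show "count l j = 0" using cl[of j] Tz[of j] o muodd0[of "j-2"] R1l
      by (cases "2 \<le> j") auto
  qed
  moreover have "\<forall>j. even j \<and> 0 < j \<and> j < R1 l \<longrightarrow> 2 \<le> count l j"
  proof (intro allI impI)
    fix j :: nat assume o: "even j \<and> 0 < j \<and> j < R1 l"
    show "2 \<le> count l j"
    proof (cases "j = 2")
      case True then show ?thesis using cl[of j] c by simp
    next
      case False
      then have "2 < j" using o False by presburger
      moreover have "even (j - 2)" "0 < j - 2" "j - 2 < R1 mu" using o R1l \<open>2 < j\<close> by auto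
      ultimately show ?thesis using cl[of j] mueven[of "j-2"] by simp
    qed
  qed
  ultimately show "l \<in> A2" unfolding A2_def is_partition_def by blast
qed

lemma f_parts: "p \<in> G2 \<Longrightarrow> \<forall>x\<in>#p. x \<le> b \<Longrightarrow> \<forall>y\<in>#f p. y \<le> b"
proof (induction "size p" arbitrary: p b rule: less_induct)
  case less
  show ?case
  proof (cases "D p = 0")
    case True then show ?thesis using f_base[OF less.prems(1) True] less.prems(2) by simp
  next
    case False
    note dc = decomp[OF less.prems(1) False]
    note d2 = decomp2[OF less.prems(1) False]
    let ?m = "R p 1"
    let ?q = "filter_mset (\<lambda>x. x < ?m) p"
    have sz: "size ?q < size p" using arg_cong[OF dc(1), of size] by simp
    have "\<forall>x\<in>#?q. x \<le> ?m - 2" using dc(4) by force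
    then have ih: "\<forall>y\<in>#f ?q. y \<le> ?m - 2" using less.hyps[OF sz dc(3)] by blast
    have mb: "?m \<le> b" using less.prems(2) dc(7) by (simp flip: count_greater_zero_iff)
    show ?thesis unfolding d2(2) using ih mb dc(2) less.prems(2) by auto
  qed
qed

lemma f_partsq: "p \<in> G2 \<Longrightarrow> x \<in># p \<Longrightarrow> x \<le> size (f p) \<or> (\<exists>y\<in>#f p. x \<le> y)"
proof (induction "size p" arbitrary: p x rule: less_induct)
  case less
  show ?case
  proof (cases "D p = 0")
    case True then show ?thesis using f_base[OF less.prems(1) True] less.prems(2) by auto
  next
    case False
    note dc = decomp[OF less.prems(1) False]
    note d2 = decomp2[OF less.prems(1) False]
    let ?m = "R p 1"
    let ?q = "filter_mset (\<lambda>x. x < ?m) p"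
    let ?T = "filter_mset (\<lambda>x. ?m < x) p"
    have sz: "size ?q < size p" using arg_cong[OF dc(1), of size] by simp
    have szf: "size (f p) = (?m - size (f ?q)) + size ?T + size (f ?q)" unfolding d2(2) by simp
    have "x \<in># ?T \<or> x = ?m \<or> x \<in># ?q" using less.prems(2) by auto
    then show ?thesis
    proof (elim disjE)
      assume "x \<in># ?T" then show ?thesis unfolding d2(2) by auto
    next
      assume "x = ?m" then show ?thesis using szf d2(1) by simp
    next
      assume xq: "x \<in># ?q"
      from less.hyps[OF sz dc(3) xq] show ?thesis
      proof
        assume "x \<le> size (f ?q)" then show ?thesis using szf d2(1) by simp
      next
        assume "\<exists>y\<in>#f ?q. x \<le> y"
        then obtain y where "y \<in># f ?q" "x \<le> y" by blast
        then have "y + 2 \<in># f p" "x \<le> y + 2" unfolding d2(2) by auto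
        then show ?thesis by blast
      qed
    qed
  qed
qed

lemma f_A2: "p \<in> G2 \<Longrightarrow> f p \<in> A2"
proof (induction "size p" arbitrary: p rule: less_induct)
  case less
  show ?case
  proof (cases "D p = 0")
    case True
    note fb = f_base[OF less.prems True]
    have "R1 p \<le> 0"
    proof (rule R1_le)
      fix j assume "2 \<le> count p j" then show "j \<le> 0" using fb(2)[of j] by simp
    qed
    then have "R1 p = 0" by simp
    then show ?thesis using fb G2_count0[OF less.prems]
      unfolding A2_def is_partition_def by (auto simp: not_in_iff)
  next
    case False
    note dc = decomp[OF less.prems False]
    note d2 = decomp2[OF less.prems False]
    let ?m = "R p 1"
    let ?q = "filter_mset (\<lambda>x. x < ?m) p"
    have sz: "size ?q < size p" using arg_cong[OF dc(1), of size] by simp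
    have ih: "f ?q \<in> A2" using less.hyps[OF sz dc(3)] .
    have "\<forall>x\<in>#?q. x \<le> ?m - 2" using dc(4) by force
    then have "\<forall>y\<in>#f ?q. y \<le> ?m - 2" using f_parts[OF dc(3)] by blast
    then have "\<forall>y\<in>#f ?q. y + 2 \<le> ?m" using dc(2) by force
    then show ?thesis unfolding d2(2)
      using A2_step(1)[OF ih _ dc(2) _ dc(5) dc(6)] d2(1) by simp
  qed
qed

lemma lam_filter:
  fixes l T mu :: "nat multiset"
  assumes l: "l = replicate_mset c 2 + T + image_mset (\<lambda>x. x + 2) mu"
    and mub: "\<forall>x\<in>#mu. 0 < x \<and> x + 2 \<le> m" and Tb: "\<forall>x\<in>#T. m + 2 \<le> x" and ms: "m \<le> s" and m2: "2 \<le> m"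
  shows "filter_mset (\<lambda>y. y \<noteq> 2 \<and> y \<le> s) l = image_mset (\<lambda>x. x + 2) mu + filter_mset (\<lambda>y. y \<le> s) T"
    "filter_mset (\<lambda>y. m < y) l = T" "count l 2 = c"
proof -
  have cl: "count l j = (if j = 2 then c else 0) + count T j + (if 2 \<le> j then count mu (j - 2) else 0)" for j
    unfolding l count_union count_plus2 by (simp add: count_replicate_mset)
  have Tz: "j < m + 2 \<Longrightarrow> count T j = 0" for j using Tb by (meson leD not_in_iff)
  have muz: "m < j + 2 \<Longrightarrow> count mu j = 0" for j using mub by (meson leD not_in_iff)
  have mu0: "count mu 0 = 0" using mub by (meson less_irrefl not_in_iff)
  show "count l 2 = c" using cl[of 2] Tz[of 2] mu0 m2 by simp
  show "filter_mset (\<lambda>y. y \<noteq> 2 \<and> y \<le> s) l = image_mset (\<lambda>x. x + 2) mu + filter_mset (\<lambda>y. y \<le> s) T"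
  proof (rule multiset_eqI)
    fix j
    show "count (filter_mset (\<lambda>y. y \<noteq> 2 \<and> y \<le> s) l) j =
          count (image_mset (\<lambda>x. x + 2) mu + filter_mset (\<lambda>y. y \<le> s) T) j"
      unfolding count_union count_plus2 count_filter_mset cl
      using Tz[of j] Tz[of 2] muz[of "j - 2"] mu0 ms m2 by auto
  qed
  show "filter_mset (\<lambda>y. m < y) l = T"
  proof (rule multiset_eqI)
    fix j
    show "count (filter_mset (\<lambda>y. m < y) l) j = count T j"
      unfolding count_filter_mset cl
      using Tz[of j] muz[of "j - 2"] using m2 by auto
  qed
qed

lemma decomp3:
  assumes pG: "p \<in> G2" and D: "D p \<noteq> 0"
  defines "m \<equiv> R p 1"
  defines "q \<equiv> filter_mset (\<lambda>x. x < m) p"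
  shows "\<forall>x\<in>#f q. 0 < x \<and> x + 2 \<le> m" "size q < size p"
proof -
  note dc = decomp[OF pG D, folded m_def, folded q_def]
  have "\<forall>x\<in>#q. x \<le> m - 2" using dc(4) by force
  then have "\<forall>y\<in>#f q. y \<le> m - 2" using f_parts[OF dc(3)] by blast
  moreover have "0 \<notin># f q" using f_A2[OF dc(3)] unfolding A2_def is_partition_def by simp
  ultimately show "\<forall>x\<in>#f q. 0 < x \<and> x + 2 \<le> m" using dc(2) by (metis gr0I le_diff_conv2)
  show "size q < size p" using arg_cong[OF dc(1), of size] by simp
qed

lemma f_inj: "p1 \<in> G2 \<Longrightarrow> p2 \<in> G2 \<Longrightarrow> f p1 = f p2 \<Longrightarrow> p1 = p2"
proof (induction "size p1" arbitrary: p1 p2 rule: less_induct)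
  case less
  have cnt2: "D p \<noteq> 0 \<Longrightarrow> p \<in> G2 \<Longrightarrow> 2 \<le> count (f p) 2" for p
  proof -
    assume D: "D p \<noteq> 0" and pG: "p \<in> G2"
    note dc = decomp[OF pG D] note d2 = decomp2[OF pG D] note d3 = decomp3[OF pG D]
    show ?thesis using lam_filter(3)[OF d2(2) d3(1) dc(5) order_refl dc(2)] d2(1) by simp
  qed
  show ?case
  proof (cases "D p1 = 0"; cases "D p2 = 0")
    assume "D p1 = 0" "D p2 = 0"
    then show ?thesis using f_base less.prems by metis
  next
    assume a: "D p1 = 0" "D p2 \<noteq> 0"
    then show ?thesis using cnt2[OF a(2) less.prems(2)] f_base(1)[OF less.prems(1) a(1)] f_base(2)[OF less.prems(1) a(1), of 2] less.prems(3)
      by simp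
  next
    assume a: "D p1 \<noteq> 0" "D p2 = 0"
    then show ?thesis using cnt2[OF a(1) less.prems(1)] f_base(1)[OF less.prems(2) a(2)] f_base(2)[OF less.prems(2) a(2), of 2] less.prems(3)
      by simp
  next
    assume D1: "D p1 \<noteq> 0" and D2: "D p2 \<noteq> 0"
    note dc1 = decomp[OF less.prems(1) D1] note d21 = decomp2[OF less.prems(1) D1] note d31 = decomp3[OF less.prems(1) D1]
    note dc2 = decomp[OF less.prems(2) D2] note d22 = decomp2[OF less.prems(2) D2] note d32 = decomp3[OF less.prems(2) D2]
    define m1 where "m1 = R p1 1"
    define m2 where "m2 = R p2 1"
    define q1 where "q1 = filter_mset (\<lambda>x. x < m1) p1"
    define q2 where "q2 = filter_mset (\<lambda>x. x < m2) p2"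
    define T1 where "T1 = filter_mset (\<lambda>x. m1 < x) p1"
    define T2 where "T2 = filter_mset (\<lambda>x. m2 < x) p2"
    define l where "l = f p1"
    define c where "c = count l 2"
    have l1: "l = replicate_mset (m1 - size (f q1)) 2 + T1 + image_mset (\<lambda>x. x + 2) (f q1)"
      using d21(2) unfolding l_def m1_def q1_def T1_def .
    have l2: "l = replicate_mset (m2 - size (f q2)) 2 + T2 + image_mset (\<lambda>x. x + 2) (f q2)"
      using d22(2) less.prems(3) unfolding l_def m2_def q2_def T2_def by simp
    note mu1 = d31(1)[folded m1_def, folded q1_def] note mu2 = d32(1)[folded m2_def, folded q2_def]
    note Tb1 = dc1(5)[folded m1_def, folded T1_def] note Tb2 = dc2(5)[folded m2_def, folded T2_def]
    note T11 = dc1(6)[folded m1_def, folded T1_def] note T21 = dc2(6)[folded m2_def, folded T2_def]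
    have m12: "2 \<le> m1" using dc1(2) unfolding m1_def .
    have m22: "2 \<le> m2" using dc2(2) unfolding m2_def .
    have s1: "size (f q1) + 2 \<le> m1" using d21(1) unfolding m1_def q1_def .
    have s2: "size (f q2) + 2 \<le> m2" using d22(1) unfolding m2_def q2_def .
    have c1: "c = m1 - size (f q1)" using lam_filter(3)[OF l1 mu1 Tb1 order_refl m12] c_def by simp
    have c2: "c = m2 - size (f q2)" using lam_filter(3)[OF l2 mu2 Tb2 order_refl m22] c_def by simp
    have noless: False if lt: "ma < mb"
      and la: "l = replicate_mset (ma - size (f qa)) 2 + Ta + image_mset (\<lambda>x. x + 2) (f qa)"
      and lb: "l = replicate_mset (mb - size (f qb)) 2 + Tb + image_mset (\<lambda>x. x + 2) (f qb)"
      and mua: "\<forall>x\<in>#f qa. 0 < x \<and> x + 2 \<le> ma" and mub: "\<forall>x\<in>#f qb. 0 < x \<and> x + 2 \<le> mb"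
      and Tba: "\<forall>x\<in>#Ta. ma + 2 \<le> x" and Tbb: "\<forall>x\<in>#Tb. mb + 2 \<le> x"
      and Ta1: "\<forall>x. count Ta x \<le> 1"
      and ca: "c = ma - size (f qa)" and cb: "c = mb - size (f qb)"
      and sa: "size (f qa) + 2 \<le> ma" and sb: "size (f qb) + 2 \<le> mb"
      and ma2: "2 \<le> ma" and mb2: "2 \<le> mb"
      for ma mb qa qb Ta Tb
    proof -
      have h1: "filter_mset (\<lambda>y. y \<noteq> 2 \<and> y \<le> mb) l = image_mset (\<lambda>x. x + 2) (f qb) + filter_mset (\<lambda>y. y \<le> mb) Tb"
        by (rule lam_filter(1)[OF lb mub Tbb order_refl mb2])
      have h2: "filter_mset (\<lambda>y. y \<le> mb) Tb = {#}" using Tbb by force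
      have h3: "filter_mset (\<lambda>y. y \<noteq> 2 \<and> y \<le> mb) l = image_mset (\<lambda>x. x + 2) (f qa) + filter_mset (\<lambda>y. y \<le> mb) Ta"
        using lt by (intro lam_filter(1)[OF la mua Tba _ ma2]) simp
      have "image_mset (\<lambda>x. x + 2) (f qb) = image_mset (\<lambda>x. x + 2) (f qa) + filter_mset (\<lambda>y. y \<le> mb) Ta"
        using h1 h2 h3 by simp
      then have eq: "size (f qb) = size (f qa) + size (filter_mset (\<lambda>y. y \<le> mb) Ta)"
        by (metis size_image_mset size_union)
      have "size (filter_mset (\<lambda>y. y \<le> mb) Ta) \<le> card {ma + 2..mb}"
        by (rule size_le_card) (use Ta1 Tba in auto)
      then show False using eq ca cb sa sb lt by simp
    qed
    have meq: "m1 = m2"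
    proof (rule ccontr)
      assume "m1 \<noteq> m2"
      then consider "m1 < m2" | "m2 < m1" by linarith
      then show False
      proof cases
        case 1 show False by (rule noless[OF 1 l1 l2 mu1 mu2 Tb1 Tb2 T11 c1 c2 s1 s2 m12 m22])
      next
        case 2 show False by (rule noless[OF 2 l2 l1 mu2 mu1 Tb2 Tb1 T21 c2 c1 s2 s1 m22 m12])
      qed
    qed
    have Teq: "T1 = T2"
      using lam_filter(2)[OF l1 mu1 Tb1 order_refl m12] lam_filter(2)[OF l2 mu2 Tb2 order_refl m22] meq by simp
    have e1: "filter_mset (\<lambda>y. y \<le> m1) T1 = {#}" using Tb1 by force
    have e2: "filter_mset (\<lambda>y. y \<le> m2) T2 = {#}" using Tb2 by force
    have "image_mset (\<lambda>x. x + 2) (f q1) = image_mset (\<lambda>x. x + 2) (f q2)"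
      using lam_filter(1)[OF l1 mu1 Tb1 order_refl m12] lam_filter(1)[OF l2 mu2 Tb2 order_refl m22] meq e1 e2
      by simp
    then have "image_mset (\<lambda>x. x - 2) (image_mset (\<lambda>x. x + 2) (f q1)) = image_mset (\<lambda>x. x - 2) (image_mset (\<lambda>x. x + 2) (f q2))"
      by simp
    then have feq: "f q1 = f q2" by (simp add: multiset.map_comp o_def)
    have "size q1 < size p1" using d31(2) unfolding q1_def m1_def .
    then have qeq: "q1 = q2" using less.hyps dc1(3) dc2(3) feq unfolding q1_def q2_def m1_def m2_def by blast
    have "p1 = T1 + replicate_mset 2 m1 + q1" using dc1(1) unfolding T1_def m1_def q1_def .
    moreover have "p2 = T2 + replicate_mset 2 m2 + q2" using dc2(1) unfolding T2_def m2_def q2_def .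
    ultimately show ?thesis using Teq qeq meq by simp
  qed
qed

lemma R1_Max:
  assumes ne: "{j. count p j = 2} \<noteq> {}"
  shows "D p \<noteq> 0" "R p 1 = Max {j. count p j = 2}"
  using R_step(1,2)[OF Rlist_step[OF ne]] by simp_all

lemma compose:
  assumes qG: "q \<in> G2" and qb: "\<forall>x\<in>#q. x + 2 \<le> r" and Tb: "\<forall>x\<in>#T. r + 2 \<le> x"
    and T1: "\<forall>x. count T x \<le> 1" and r2: "2 \<le> r" and p: "p = T + replicate_mset 2 r + q"
  shows "p \<in> G2" "D p \<noteq> 0" "R p 1 = r" "filter_mset (\<lambda>x. r < x) p = T" "filter_mset (\<lambda>x. x < r) p = q"
proof -
  have Tz: "j < r + 2 \<Longrightarrow> count T j = 0" for j using Tb by (meson leD not_in_iff)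
  have qz: "r < j + 2 \<Longrightarrow> count q j = 0" for j using qb by (meson leD not_in_iff)
  have cp: "count p j = count T j + (if j = r then 2 else 0) + count q j" for j
    unfolding p by simp
  have q0: "count q 0 = 0" by (rule G2_count0[OF qG])
  have q1: "count q 1 \<le> 1" using qG by (simp add: G2_def)
  have qpair: "j \<ge> 1 \<Longrightarrow> count q j + count q (j+1) \<le> 2" for j using qG by (simp add: G2_def)
  have E: "r \<in> {j. count p j = 2}" using cp[of r] Tz[of r] qz[of r] by simp
  have Ele: "j \<in> {j. count p j = 2} \<Longrightarrow> j \<le> r" for j
  proof (rule ccontr)
    assume "j \<in> {j. count p j = 2}" "\<not> j \<le> r"
    then have "count p j = count T j" using cp[of j] qz[of j] by simp
    then show False using \<open>j \<in> {j. count p j = 2}\<close> T1 by (metis mem_Collect_eq numeral_le_one_iff semiring_norm(69))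
  qed
  have ne: "{j. count p j = 2} \<noteq> {}" using E by blast
  show "D p \<noteq> 0" by (rule R1_Max(1)[OF ne])
  show "R p 1 = r" using R1_Max(2)[OF ne] E Ele finE[of p] by (metis Max_eqI)
  show "filter_mset (\<lambda>x. r < x) p = T"
    by (rule multiset_eqI) (use Tz qz in \<open>auto simp: cp\<close>)
  show "filter_mset (\<lambda>x. x < r) p = q"
    by (rule multiset_eqI) (use Tz qz in \<open>auto simp: cp\<close>)
  have "0 \<notin># p" using cp[of 0] Tz[of 0] q0 r2 by (simp add: not_in_iff)
  moreover have "count p 1 \<le> 1" using cp[of 1] Tz[of 1] q1 r2 by simp
  moreover have "\<forall>j\<ge>1. count p j + count p (j + 1) \<le> 2"
  proof (intro allI impI)
    fix j :: nat assume j1: "1 \<le> j"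
    consider "j + 2 \<le> r" | "j + 1 = r" | "j = r" | "r < j" by linarith
    then show "count p j + count p (j + 1) \<le> 2"
    proof cases
      case 1 then show ?thesis using cp[of j] cp[of "j+1"] Tz[of j] Tz[of "j+1"] qpair[OF j1] by simp
    next
      case 2 then show ?thesis using cp[of j] cp[of "j+1"] Tz[of j] Tz[of "j+1"] qz[of j] qz[of "j+1"] by simp
    next
      case 3 then show ?thesis using cp[of j] cp[of "j+1"] Tz[of j] Tz[of "j+1"] qz[of j] qz[of "j+1"] by simp
    next
      case 4
      then have a: "count p j = count T j" "count p (j+1) = count T (j+1)"
        using cp[of j] cp[of "j+1"] qz[of j] qz[of "j+1"] by auto
      have "count T j \<le> 1" "count T (j+1) \<le> 1" using T1 by auto
      then show ?thesis using a by linarith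
    qed
  qed
  ultimately show "p \<in> G2" unfolding G2_def is_partition_def by blast
qed

lemma count_le_size: "count N x \<le> size N"
  by (induction N) auto

lemma evens_size:
  assumes lA: "l \<in> A2" and cR: "2 \<le> count l (R1 l)"
  shows "2 * k \<le> R1 l \<Longrightarrow> 2 * k \<le> size (filter_mset (\<lambda>y. y \<le> 2 * k) l)"
proof (induction k)
  case 0 then show ?case by simp
next
  case (Suc k)
  have ev: "2 \<le> count l (2 * Suc k)"
  proof (cases "2 * Suc k = R1 l")
    case True then show ?thesis using cR by simp
  next
    case False
    then have "2 * Suc k < R1 l" using Suc.prems by simp
    then show ?thesis using lA unfolding A2_def by auto
  qed
  have sp: "filter_mset (\<lambda>y. y \<le> 2 * Suc k) l = filter_mset (\<lambda>y. y \<le> 2 * k) l + filter_mset (\<lambda>y. 2 * k < y \<and> y \<le> 2 * Suc k) l"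
    by (rule multiset_eqI) auto
  have "count (filter_mset (\<lambda>y. 2 * k < y \<and> y \<le> 2 * Suc k) l) (2 * Suc k) \<le> size (filter_mset (\<lambda>y. 2 * k < y \<and> y \<le> 2 * Suc k) l)"
    by (rule count_le_size)
  then have "2 \<le> size (filter_mset (\<lambda>y. 2 * k < y \<and> y \<le> 2 * Suc k) l)" using ev by simp
  then show ?case using Suc sp by simp
qed

lemma f_surj: "l \<in> A2 \<Longrightarrow> \<exists>p\<in>G2. f p = l"
proof (induction "size l" arbitrary: l rule: less_induct)
  case less
  have lA: "l \<in> A2" by fact
  have l0: "count l 0 = 0" using lA unfolding A2_def is_partition_def by (simp add: not_in_iff)
  have lodd: "odd j \<Longrightarrow> count l j \<le> 1" for j using lA unfolding A2_def by blast
  have lodd0: "odd j \<Longrightarrow> j < R1 l \<Longrightarrow> count l j = 0" for j using lA unfolding A2_def by blast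
  have leven: "even j \<Longrightarrow> 0 < j \<Longrightarrow> j < R1 l \<Longrightarrow> 2 \<le> count l j" for j using lA unfolding A2_def by blast
  show ?case
  proof (cases "R1 l = 0")
    case True
    have le1: "count l j \<le> 1" for j
    proof (rule ccontr)
      assume "\<not> count l j \<le> 1"
      then have "j \<le> R1 l" by (intro R1_ge) simp
      then show False using True l0 \<open>\<not> count l j \<le> 1\<close> by simp
    qed
    have pr: "count l j + count l (j+1) \<le> 2" for j using le1[of j] le1[of "j+1"] by linarith
    have lG: "l \<in> G2" unfolding G2_def is_partition_def
      using le1 l0 pr by (auto simp: not_in_iff)
    have "D l = 0" unfolding D_card using le1 by (metis (mono_tags) Collect_empty_eq card.empty numeral_le_one_iff semiring_norm(69))
    then show ?thesis using f_base(1)[OF lG] lG by blast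
  next
    case False
    define RR where "RR = R1 l"
    have R0: "0 < RR" using False RR_def by simp
    have cR: "2 \<le> count l RR" using R1_cases[of l] False RR_def by simp
    have Rev: "even RR" using cR lodd[of RR] by linarith
    have R2: "2 \<le> RR" using R0 Rev by (metis dvd_imp_le less_one not_less numeral_le_one_iff odd_one semiring_norm(69) linorder_not_le even_iff_mod_2_eq_zero gr0I) 
    define c where "c = count l 2"
    have c2: "2 \<le> c"
    proof (cases "RR = 2")
      case True then show ?thesis using cR c_def by simp
    next
      case False then show ?thesis using leven[of 2] R2 RR_def c_def by simp
    qed
    have l1: "count l 1 = 0" using lodd0[of 1] R2 RR_def by simp
    define L where "L = filter_mset (\<lambda>y. y \<noteq> 2) l"
    define g where "g s = size (filter_mset (\<lambda>y. y \<le> s) L)" for s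
    have flt: "filter_mset (\<lambda>y. y \<le> s) l = filter_mset (\<lambda>y. y \<le> s) L + replicate_mset c 2" if "2 \<le> s" for s
      by (rule multiset_eqI) (use that in \<open>auto simp: L_def c_def\<close>)
    have "RR \<le> size (filter_mset (\<lambda>y. y \<le> RR) l)"
      using evens_size[OF lA cR[unfolded RR_def], of "RR div 2"] Rev RR_def by simp
    then have Rin: "RR \<le> g RR + c" using flt[OF R2] g_def by simp
    define S where "S = {s. RR \<le> s \<and> s \<le> g s + c}"
    have gle: "g s \<le> size L" for s unfolding g_def by (rule size_filter_mset_lesseq)
    have finS: "finite S"
      by (rule finite_subset[of _ "{..size L + c}"]) (use gle in \<open>auto simp: S_def intro: order_trans\<close>)
    have RS: "RR \<in> S" using Rin S_def by simp
    define r where "r = Max S"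
    have rS: "r \<in> S" using Max_in[OF finS] RS r_def by blast
    have r1S: "r + 1 \<notin> S" using Max_ge[OF finS, of "r+1"] r_def by auto
    have gsuc: "g (r + 1) = g r + count L (r + 1)"
    proof -
      have "filter_mset (\<lambda>y. y \<le> r + 1) L = filter_mset (\<lambda>y. y \<le> r) L + replicate_mset (count L (r + 1)) (r + 1)"
        by (rule multiset_eqI) auto
      then show ?thesis unfolding g_def by simp
    qed
    have Rr: "RR \<le> r" using rS S_def by simp
    have cL: "count L (r + 1) = 0" and gr: "g r + c = r"
      using rS r1S Rr gsuc unfolding S_def by auto
    define F where "F = filter_mset (\<lambda>y. y \<le> r) L"
    define T where "T = filter_mset (\<lambda>y. r < y) L"
    define mu where "mu = image_mset (\<lambda>x. x - 2) F"
    have cF: "count F j = (if j \<noteq> 2 \<and> j \<le> r then count l j else 0)" for j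
      unfolding F_def L_def by simp
    have Fge: "x \<in># F \<Longrightarrow> 2 \<le> x" for x
    proof -
      assume "x \<in># F"
      then have "0 < count F x" by simp
      then have "0 < count l x" using cF[of x] by (simp split: if_splits)
      then have "x \<noteq> 0" "x \<noteq> 1" using l0 l1 by (metis less_irrefl)+
      then show "2 \<le> x" by linarith
    qed
    have Fmu: "image_mset (\<lambda>x. x + 2) mu = F"
    proof -
      have "image_mset (\<lambda>x. x + 2) mu = image_mset (\<lambda>x. x - 2 + 2) F" unfolding mu_def by (simp add: multiset.map_comp o_def)
      also have "... = image_mset (\<lambda>x. x) F" by (rule image_mset_cong) (use Fge in force)
      finally show ?thesis by simp
    qed
    have cmu: "count mu i = (if i \<noteq> 0 \<and> i + 2 \<le> r then count l (i + 2) else 0)" for i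
      using count_plus2[of mu "i + 2"] cF[of "i+2"] Fmu by simp
    have lsplit: "l = replicate_mset c 2 + T + image_mset (\<lambda>x. x + 2) mu"
      unfolding Fmu by (rule multiset_eqI) (use R2 Rr in \<open>auto simp: T_def F_def L_def c_def\<close>)
    have szF: "size mu = r - c" using gr g_def F_def mu_def by simp
    have Tb: "\<forall>x\<in>#T. r + 2 \<le> x"
    proof
      fix x assume "x \<in># T"
      then have "r < x" "x \<in># L" unfolding T_def by auto
      then show "r + 2 \<le> x" using cL by (cases "x = r + 1") (auto simp flip: count_greater_zero_iff)
    qed
    have T1: "\<forall>x. count T x \<le> 1"
    proof
      fix x
      show "count T x \<le> 1"
      proof (rule ccontr)
        assume a: "\<not> count T x \<le> 1"
        then have "r < x" "2 \<le> count l x" unfolding T_def L_def by (auto split: if_splits)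
        then show False using R1_ge[of l x] RR_def Rr by simp
      qed
    qed
    have mub: "\<forall>x\<in>#mu. x + 2 \<le> r" using cmu by (auto split: if_splits simp flip: count_greater_zero_iff)
    have muA: "mu \<in> A2"
    proof -
      have R1mu: "R1 mu = RR - 2"
      proof (rule antisym)
        show "R1 mu \<le> RR - 2"
        proof (rule R1_le)
          fix j assume "2 \<le> count mu j"
          then have "2 \<le> count l (j + 2)" using cmu[of j] by (simp split: if_splits)
          then have "j + 2 \<le> RR" using R1_ge RR_def by blast
          then show "j \<le> RR - 2" by simp
        qed
        show "RR - 2 \<le> R1 mu"
        proof (cases "RR = 2")
          case True then show ?thesis by simp
        next
          case False
          obtain k where k: "RR = k + 2" using R2 by (metis add.commute le_Suc_ex)
          then have "count mu (RR - 2) = count l RR" using cmu[of k] False Rr by simp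
          then show ?thesis using cR R1_ge[of mu "RR - 2"] by simp
        qed
      qed
      have "0 \<notin># mu" using cmu[of 0] by (simp add: not_in_iff)
      moreover have "\<forall>j. odd j \<longrightarrow> count mu j \<le> 1" using cmu lodd by auto
      moreover have "\<forall>j. odd j \<and> j < R1 mu \<longrightarrow> count mu j = 0"
        using cmu lodd0 R1mu RR_def by auto
      moreover have "\<forall>j. even j \<and> 0 < j \<and> j < R1 mu \<longrightarrow> 2 \<le> count mu j"
        using cmu leven R1mu RR_def Rr by auto
      ultimately show ?thesis unfolding A2_def is_partition_def by blast
    qed
    have "size mu < size l" using arg_cong[OF lsplit, of size] c2 by simp
    then obtain q where qG: "q \<in> G2" and fq: "f q = mu" using less.hyps muA by blast
    have qb: "\<forall>x\<in>#q. x + 2 \<le> r"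
    proof
      fix x assume "x \<in># q"
      from f_partsq[OF qG this] show "x + 2 \<le> r"
      proof
        assume "x \<le> size (f q)" then show ?thesis using fq szF c2 gr by simp
      next
        assume "\<exists>y\<in>#f q. x \<le> y" then show ?thesis using fq mub by force
      qed
    qed
    define p where "p = T + replicate_mset 2 r + q"
    note cp = compose[OF qG qb Tb T1 _ p_def]
    have r2: "2 \<le> r" using R2 Rr by simp
    have pG: "p \<in> G2" and Dp: "D p \<noteq> 0" and Rp: "R p 1 = r"
      and pT: "filter_mset (\<lambda>x. r < x) p = T" and pq: "filter_mset (\<lambda>x. x < r) p = q"
      using cp r2 by auto
    have "f p = replicate_mset (r - size (f q)) 2 + T + image_mset (\<lambda>x. x + 2) (f q)"
      using decomp2(2)[OF pG Dp] unfolding Rp pT pq .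
    also have "... = l" using lsplit fq szF gr by simp
    finally show ?thesis using pG by blast
  qed
qed

theorem theorem4:
  shows "bij_betw f G2 A2 \<and> (\<forall>p\<in>G2. sum_mset (f p) = sum_mset p)"
proof -
  have "inj_on f G2" by (rule inj_onI) (rule f_inj)
  moreover have "f ` G2 = A2"
    using f_A2 f_surj by blast
  ultimately show ?thesis using f_sum by (simp add: bij_betw_def)
qed

end
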